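(* In the Standing Setup with $R=-v(X-w)$ ($v,w\in\mathbb F$), for every $h\in\mathbb Z$: $$d_{h-1}d_hd_{h+1}=-v(e_h+w),$$ $$e_h+e_{h+1}+v_h=\frac{v}{d_hd_{h+1}},\qquad e_he_{h+1}-w_h=-\frac{vw}{d_hd_{h+1}} .$$
   Context: Standing Setup. $\mathbb F$ is a field of characteristic not $2$ or $3$; $f,g\in\mathbb F$; $A=X^3+fX+g\in\mathbb F[X]$; $R\in\mathbb F[X]$ is a polynomial of degree at most $2$; $D=A^2+4R$; $Y$ satisfies $Y^2=D(X)$, $Z=\tfrac12(Y+A)$ and $\overline Z=\tfrac12(-Y+A)$, so $Z+\overline Z=A$ and $Z\overline Z=-R$. We are given sequences $(u_h),(v_h),(w_h),(d_h),(e_h)$ of elements of $\mathbb F$ indexed by $h\in\mathbb Z$, with all $u_h\neq0$, such that for every $h\in\mathbb Z$ the following two identities hold in $\mathbb F[X]$: (i) $A+d_h(X+e_h)+d_{h+1}(X+e_{h+1})=(X+v_h)(X^2-v_hX+w_h)$; (ii) $-u_hu_{h+1}(X^2-v_hX+w_h)(X^2-v_{h+1}X+w_{h+1})=d_{h+1}^2(X+e_{h+1})^2+d_{h+1}(X+e_{h+1})A-R$. (These say that $Z_h=\bigl(Z+d_h(X+e_h)\bigr)/\bigl(u_h(X^2-v_hX+w_h)\bigr)$ are consecutive complete quotients of a continued fraction expansion with partial quotients $(X+v_h)/u_h$.) *)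

theory Defs
  imports "HOL-Computational_Algebra.Polynomial"
begin

end

theory Submission
  imports Defs
begin

lemma sm: "smult c p = [:c:] * p" by simp

theorem mainTheorem7:
  fixes f g vR wR :: "'a :: field"
    and u v w d e :: "int \<Rightarrow> 'a"
    and A R :: "'a poly"
  assumes char2: "(2::'a) \<noteq> 0" and char3: "(3::'a) \<noteq> 0"
    and A_def: "A = [:g, f, 0, 1:]"
    and R_def: "R = - smult vR ([:0, 1:] - [:wR:])"
    and u_nz: "\<And>h. u h \<noteq> 0"
    and i: "\<And>h. A + smult (d h) [:e h, 1:] + smult (d (h+1)) [:e (h+1), 1:]
                 = [:v h, 1:] * [:w h, - v h, 1:]"
    and ii: "\<And>h. - smult (u h * u (h+1)) ([:w h, - v h, 1:] * [:w (h+1), - v (h+1), 1:])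
                 = smult ((d (h+1))\<^sup>2) ([:e (h+1), 1:]\<^sup>2) + smult (d (h+1)) [:e (h+1), 1:] * A - R"
  shows "d (h-1) * d h * d (h+1) = - vR * (e h + wR)
       \<and> e h + e (h+1) + v h = vR / (d h * d (h+1))
       \<and> e h * e (h+1) - w h = - (vR * wR) / (d h * d (h+1))"
proof -
  define q where "q k = [:w k, - v k, 1:]" for k
  define l where "l k = [:e k, 1:]" for k
  define m where "m k = [:v k, 1:]" for k
  have q0: "q k \<noteq> 0" for k unfolding q_def by simp
  have dk: "d (k+1) = - (u k * u (k+1))" for k
    using arg_cong[OF ii[of k], of "\<lambda>p. coeff p 4"] by (simp add: A_def R_def power2_eq_square numeral_eq_Suc)
  have dnz: "d k \<noteq> 0" for k using dk[of "k-1"] u_nz by simp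
  have iA: "A = m k * q k - smult (d k) (l k) - smult (d (k+1)) (l (k+1))" for k
    using i[of k, folded q_def l_def m_def] by (simp add: eq_diff_eq add_ac)
  have ii': "smult (d (k+1)) (q k * q (k+1)) = smult (d (k+1)) (l (k+1)) * (smult (d (k+1)) (l (k+1)) + A) - R" for k
    using ii[of k, folded q_def l_def] unfolding dk[of k] by (simp add: algebra_simps power2_eq_square)
  have E1: "[:d k:] * [:d (k+1):] * l k * l (k+1) + R = q k * ([:d (k+1):] * (l (k+1) * m k - q (k+1)))" for k
    using ii'[of k, unfolded iA[of k]] unfolding sm by algebra
  have I1: "d k * d (k+1) * (e k + e (k+1)) - vR = - d k * d (k+1) * v k
     \<and> d k * d (k+1) * e k * e (k+1) + vR * wR = d k * d (k+1) * w k" for k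
  proof -
    have c3: "coeff ([:d k:] * [:d (k+1):] * l k * l (k+1) + R) 3 = coeff (q k * ([:d (k+1):] * (l (k+1) * m k - q (k+1)))) 3"
     and c2: "coeff ([:d k:] * [:d (k+1):] * l k * l (k+1) + R) 2 = coeff (q k * ([:d (k+1):] * (l (k+1) * m k - q (k+1)))) 2"
     and c1: "coeff ([:d k:] * [:d (k+1):] * l k * l (k+1) + R) 1 = coeff (q k * ([:d (k+1):] * (l (k+1) * m k - q (k+1)))) 1"
     and c0: "coeff ([:d k:] * [:d (k+1):] * l k * l (k+1) + R) 0 = coeff (q k * ([:d (k+1):] * (l (k+1) * m k - q (k+1)))) 0"
      using E1[of k] by simp_all
    note defs = q_def l_def m_def R_def
    from c3 have s1: "d (k+1) * (e (k+1) + v k + v (k+1)) = 0" by (simp add: defs numeral_eq_Suc algebra_simps)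
    from c2 have s0: "d k * d (k+1) = d (k+1) * (e (k+1) * v k - w (k+1)) - v k * (d (k+1) * (e (k+1) + v k + v (k+1)))"
      by (simp add: defs numeral_eq_Suc algebra_simps)
    have s0': "d (k+1) * (e (k+1) * v k - w (k+1)) = d k * d (k+1)" using s0 unfolding s1 by (simp only: mult_zero_right diff_zero eq_commute)
    from c1 have A1: "d k * d (k+1) * (e k + e (k+1)) - vR = w k * (d (k+1) * (e (k+1) + v k + v (k+1))) - v k * (d (k+1) * (e (k+1) * v k - w (k+1)))"
      by (simp add: defs numeral_eq_Suc algebra_simps)
    from c0 have A0: "d k * d (k+1) * e k * e (k+1) + vR * wR = w k * (d (k+1) * (e (k+1) * v k - w (k+1)))"
      by (simp add: defs numeral_eq_Suc algebra_simps)
    from A1 A0 show ?thesis unfolding s1 s0' by (simp add: algebra_simps)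
  qed
  have PI: "[:d k:] * [:d (k+1):] * l k * l (k+1) + R = [:d k:] * [:d (k+1):] * q k" for k
  proof -
    have "[:d k:] * [:d (k+1):] * l k * l (k+1) + R = [:d k * d (k+1):] * q k"
      using I1[of k] unfolding l_def q_def R_def
      by (simp add: algebra_simps)
    then show ?thesis by (simp add: mult.commute)
  qed
  have L3: "q (k+1) = l (k+1) * m k - [:d k:]" for k
  proof -
    have "[:d (k+1):] * q k * (q (k+1) - (l (k+1) * m k - [:d k:])) = 0"
      using ii'[of k, unfolded iA[of k]] PI[of k] unfolding sm by algebra
    then show ?thesis using q0[of k] dnz[of "k+1"] by simp
  qed
  have L2: "q k = l (k+1) * m (k+1) - [:d (k+2):]" for k
  proof -
    have i2: "A = m (k+1) * q (k+1) - smult (d (k+1)) (l (k+1)) - smult (d (k+2)) (l (k+2))"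
      using iA[of "k+1"] by (simp add: add.assoc)
    have p2: "[:d (k+1):] * [:d (k+2):] * l (k+1) * l (k+2) + R = [:d (k+1):] * [:d (k+2):] * q (k+1)"
      using PI[of "k+1"] by (simp add: add.assoc)
    have "[:d (k+1):] * q (k+1) * (q k - (l (k+1) * m (k+1) - [:d (k+2):])) = 0"
      using ii'[of k, unfolded i2] p2 unfolding sm by algebra
    then show ?thesis using q0[of "k+1"] dnz[of "k+1"] by simp
  qed
  have a1: "q (h-1) = l h * m h - [:d (h+1):]" using L2[of "h-1"] by (simp add: add.commute)
  have a2: "q h = l h * m (h-1) - [:d (h-1):]" using L3[of "h-1"] by simp
  have a3: "smult (d h) (q (h-1) * q h) = smult (d h) (l h) * (smult (d h) (l h) + A) - R"
    using ii'[of "h-1"] by simp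
  have "poly (smult (d h) (q (h-1) * q h)) (- e h) = poly (smult (d h) (l h) * (smult (d h) (l h) + A) - R) (- e h)"
    using a3 by simp
  then have c1: "d (h-1) * d h * d (h+1) = - vR * (e h + wR)"
    unfolding a1 a2 by (simp add: l_def R_def algebra_simps)
  have Pn: "d h * d (h+1) \<noteq> 0" using dnz by simp
  show ?thesis using c1 I1[of h] Pn by (simp add: field_simps)
qed

end
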